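(* Let $I$ be a monomial ideal of $R=K[x_1,\ldots,x_d]$ ($K$ a field) and let $r,s\in\mathbb{R}$, $r,s\ge0$. Then (1) if $s\ge r\ge0$, then $\overline{I^s}\subseteq\overline{I^r}$; (2) $\overline{I^s}\cdot\overline{I^r}\subseteq\overline{I^{s+r}}$.
   Context: $\mathbb{N}$ denotes the non-negative integers and $\mathbf{x}^{\mathbf{a}}=x_1^{a_1}\cdots x_d^{a_d}$. $NP(I)$ is the convex hull in $\mathbb{R}^d$ of $\{\mathbf{a}\in\mathbb{N}^d\mid \mathbf{x}^{\mathbf{a}}\in I\}$. For real $t\ge0$, the $t$-th real power of $I$ is $\overline{I^t}=(\{\mathbf{x}^{\mathbf{a}}\mid \mathbf{a}\in t\cdot NP(I)\cap\mathbb{N}^d\})$, where $t\cdot NP(I)=\{t\mathbf{v}\mid\mathbf{v}\in NP(I)\}$. *)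

theory Defs
  imports "HOL-Analysis.Analysis" "HOL-Library.Poly_Mapping"
begin

text \<open>The polynomial ring K[x_i : i in 'n] over a field K with finitely many variables
  indexed by the finite type 'n (d = CARD('n)) is modelled
  as finitely supported maps from exponent vectors to coefficients.\<close>

type_synonym ('n, 'k) mpoly = "('n \<Rightarrow>\<^sub>0 nat) \<Rightarrow>\<^sub>0 'k"

definition monom :: "('n \<Rightarrow>\<^sub>0 nat) \<Rightarrow> ('n, 'k::zero_neq_one) mpoly" where
  "monom a = Poly_Mapping.single a 1"

definition is_ideal :: "('n, 'k::comm_ring_1) mpoly set \<Rightarrow> bool" where
  "is_ideal I \<longleftrightarrow> 0 \<in> I \<and> (\<forall>f\<in>I. \<forall>g\<in>I. f + g \<in> I) \<and> (\<forall>f\<in>I. \<forall>r. r * f \<in> I)"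

definition ideal_gen :: "('n, 'k::comm_ring_1) mpoly set \<Rightarrow> ('n, 'k) mpoly set" where
  "ideal_gen S = \<Inter>{I. is_ideal I \<and> S \<subseteq> I}"

definition monomial_ideal :: "('n, 'k::comm_ring_1) mpoly set \<Rightarrow> bool" where
  "monomial_ideal I \<longleftrightarrow> is_ideal I \<and> I = ideal_gen {monom a | a. monom a \<in> I}"

definition ideal_prod :: "('n, 'k::comm_ring_1) mpoly set \<Rightarrow> ('n, 'k) mpoly set \<Rightarrow> ('n, 'k) mpoly set" where
  "ideal_prod I J = ideal_gen {f * g | f g. f \<in> I \<and> g \<in> J}"

definition expv :: "('n::finite \<Rightarrow>\<^sub>0 nat) \<Rightarrow> real ^ 'n" where
  "expv a = (\<chi> i. real (Poly_Mapping.lookup a i))"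

definition newton_poly :: "('n::finite, 'k::comm_ring_1) mpoly set \<Rightarrow> (real ^ 'n) set" where
  "newton_poly I = convex hull {expv a | a. monom a \<in> I}"

definition real_power :: "('n::finite, 'k::comm_ring_1) mpoly set \<Rightarrow> real \<Rightarrow> ('n, 'k) mpoly set" where
  "real_power I t = ideal_gen {monom a | a. expv a \<in> (\<lambda>v. t *\<^sub>R v) ` newton_poly I}"

end

theory Submission
  imports Defs
begin

lemma ideal_gen_ideal: "is_ideal (ideal_gen S)"
  unfolding ideal_gen_def is_ideal_def by blast

lemma ideal_gen_sub: "S \<subseteq> ideal_gen S"
  unfolding ideal_gen_def by blast

lemma ideal_gen_min: "is_ideal J \<Longrightarrow> S \<subseteq> J \<Longrightarrow> ideal_gen S \<subseteq> J"
  unfolding ideal_gen_def by blast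

lemma monom_mult: "(monom a :: ('n, 'k::comm_ring_1) mpoly) * monom b = monom (a + b)"
  unfolding monom_def by (simp add: mult_single)

lemma expv_add: "expv (a + b) = expv a + expv b"
  unfolding expv_def by (simp add: vec_eq_iff lookup_add)

lemma expv_0: "expv 0 = 0"
  unfolding expv_def by (simp add: vec_eq_iff)

lemma mult_lattice:
  fixes I :: "('n::finite, 'k::comm_ring_1) mpoly set"
  assumes "is_ideal I" "monom a \<in> I" "k \<ge> 1"
  shows "\<exists>b. monom b \<in> I \<and> expv b = real k *\<^sub>R expv a"
  using assms(3)
proof (induction k rule: dec_induct)
  case base
  then show ?case using assms(2) by auto
next
  case (step k)
  then obtain b where b: "monom b \<in> I" "expv b = real k *\<^sub>R expv a" by blast
  have "monom b * monom a \<in> I"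
    using assms(1) assms(2) unfolding is_ideal_def by blast
  hence "monom (b + a) \<in> I" by (simp add: monom_mult)
  moreover have "expv (b + a) = real (Suc k) *\<^sub>R expv a"
    using b(2) by (simp add: expv_add algebra_simps)
  ultimately show ?case by blast
qed

lemma scale_NP:
  fixes I :: "('n::finite, 'k::comm_ring_1) mpoly set"
  assumes "is_ideal I" "v \<in> newton_poly I" "c \<ge> 1"
  shows "c *\<^sub>R v \<in> newton_poly I"
proof -
  let ?E = "{expv a | a. monom a \<in> I}"
  have sub: "(\<lambda>x. c *\<^sub>R x) ` ?E \<subseteq> convex hull ?E"
  proof
    fix y assume "y \<in> (\<lambda>x. c *\<^sub>R x) ` ?E"
    then obtain a where a: "monom a \<in> I" "y = c *\<^sub>R expv a" by blast
    define k where "k = nat (floor c)"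
    have k1: "k \<ge> 1" using assms(3) unfolding k_def by linarith
    have kc: "real k \<le> c" "c < real k + 1" using assms(3) unfolding k_def by linarith+
    obtain b1 where b1: "monom b1 \<in> I" "expv b1 = real k *\<^sub>R expv a"
      using mult_lattice[OF assms(1) a(1) k1] by blast
    obtain b2 where b2: "monom b2 \<in> I" "expv b2 = real (Suc k) *\<^sub>R expv a"
      using mult_lattice[OF assms(1) a(1)] k1 by (meson le_SucI)
    have m1: "expv b1 \<in> convex hull ?E" using b1(1) by (auto intro: hull_inc)
    have m2: "expv b2 \<in> convex hull ?E" using b2(1) by (auto intro: hull_inc)
    define t where "t = c - real k"
    have t: "0 \<le> t" "t \<le> 1" using kc unfolding t_def by auto
    have "(1 - t) *\<^sub>R expv b1 + t *\<^sub>R expv b2 \<in> convex hull ?E"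
      using convexD_alt[OF convex_convex_hull m1 m2 t] by simp
    moreover have "(1 - t) *\<^sub>R expv b1 + t *\<^sub>R expv b2 = y"
      unfolding b1(2) b2(2) a(2) t_def by (simp add: algebra_simps)
    ultimately show "y \<in> convex hull ?E" by simp
  qed
  have "(\<lambda>x. c *\<^sub>R x) ` (convex hull ?E) \<subseteq> convex hull ?E"
    unfolding convex_hull_scaling[symmetric]
    by (rule hull_minimal[where S=convex, OF sub convex_convex_hull])
  thus ?thesis using assms(2) unfolding newton_poly_def by blast
qed

theorem lemma5p1:
  fixes I :: "('n::finite, 'k::field) mpoly set" and r s :: real
  assumes "monomial_ideal I" and "r \<ge> 0" and "s \<ge> 0"
  shows "(s \<ge> r \<longrightarrow> real_power I s \<subseteq> real_power I r)
         \<and> ideal_prod (real_power I s) (real_power I r) \<subseteq> real_power I (s + r)"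
proof
  have idI: "is_ideal I" using assms(1) unfolding monomial_ideal_def by blast
  let ?S = "\<lambda>t. {monom a | a. expv a \<in> (\<lambda>v. t *\<^sub>R v) ` newton_poly I} :: ('n, 'k) mpoly set"
  have gsub: "?S t \<subseteq> real_power I t" for t
    unfolding real_power_def by (rule ideal_gen_sub)
  have gid: "is_ideal (real_power I t)" for t
    unfolding real_power_def by (rule ideal_gen_ideal)
  have gmin: "real_power I t \<subseteq> J" if "is_ideal J" "?S t \<subseteq> J" for t J
    unfolding real_power_def by (rule ideal_gen_min[OF that])
  show "s \<ge> r \<longrightarrow> real_power I s \<subseteq> real_power I r"
  proof
    assume sr: "s \<ge> r"
    have "?S s \<subseteq> real_power I r"
    proof
      fix f assume "f \<in> ?S s"
      then obtain a v where a: "f = monom a" "v \<in> newton_poly I" "expv a = s *\<^sub>R v" by blast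
      show "f \<in> real_power I r"
      proof (cases "r = 0")
        case True
        have "monom 0 \<in> ?S r" using a(2) True proof -
          have "expv 0 = r *\<^sub>R v" using True by (simp add: expv_0)
          hence "expv 0 \<in> (\<lambda>v. r *\<^sub>R v) ` newton_poly I" using a(2) by blast
          thus ?thesis by blast
        qed
        hence "monom 0 \<in> real_power I r" using gsub by blast
        hence "monom a * monom 0 \<in> real_power I r"
          using gid[of r] unfolding is_ideal_def by blast
        thus ?thesis using a(1) by (simp add: monom_mult)
      next
        case False
        hence rpos: "r > 0" using assms(2) by simp
        have "(s / r) *\<^sub>R v \<in> newton_poly I"
          using scale_NP[OF idI a(2)] rpos sr by simp
        moreover have "expv a = r *\<^sub>R ((s / r) *\<^sub>R v)" using a(3) rpos by simp
        ultimately have "f \<in> ?S r" using a(1) by blast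
        thus ?thesis using gsub by blast
      qed
    qed
    thus "real_power I s \<subseteq> real_power I r"
      by (rule gmin[OF gid])
  qed
  show "ideal_prod (real_power I s) (real_power I r) \<subseteq> real_power I (s + r)"
  proof -
    let ?J = "real_power I (s + r)"
    have idJ: "is_ideal ?J" by (rule gid)
    have mm: "monom a * monom b \<in> ?J" if ha: "monom a \<in> ?S s" and hb: "monom b \<in> ?S r" for a b
    proof -
      obtain a' v where av: "monom a = (monom a' :: ('n, 'k) mpoly)" "v \<in> newton_poly I" "expv a' = s *\<^sub>R v"
        using ha by auto
      obtain b' w where bw: "monom b = (monom b' :: ('n, 'k) mpoly)" "w \<in> newton_poly I" "expv b' = r *\<^sub>R w"
        using hb by auto
      have "expv (a' + b') \<in> (\<lambda>v. (s + r) *\<^sub>R v) ` newton_poly I"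
      proof (cases "s + r = 0")
        case True
        hence "s = 0" "r = 0" using assms by auto
        then have "expv (a' + b') = (s + r) *\<^sub>R v" using av bw by (simp add: expv_add)
        then show ?thesis using av(2) by blast
      next
        case False
        hence pos: "s + r > 0" using assms by auto
        let ?u = "(s / (s + r)) *\<^sub>R v + (r / (s + r)) *\<^sub>R w"
        have "?u \<in> newton_poly I"
          unfolding newton_poly_def
          apply (rule convexD[OF convex_convex_hull])
          using av(2) bw(2) pos assms unfolding newton_poly_def
          by (auto simp: add_divide_distrib[symmetric])
        moreover have "expv (a' + b') = (s + r) *\<^sub>R ?u"
          using av(3) bw(3) pos by (simp add: expv_add scaleR_add_right)
        ultimately show ?thesis by blast
      qed
      hence "monom (a' + b') \<in> ?J" using gsub by blast
      thus ?thesis using av(1) bw(1) by (simp add: monom_mult)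
    qed
    have step1: "f * monom b \<in> ?J" if "f \<in> real_power I s" "monom b \<in> ?S r" for f b
    proof -
      have "is_ideal {f. f * monom b \<in> ?J}"
        using idJ unfolding is_ideal_def by (auto simp: distrib_right mult.assoc)
      moreover have "?S s \<subseteq> {f. f * monom b \<in> ?J}" using mm that(2) by blast
      ultimately show ?thesis using gmin that(1) by blast
    qed
    have step2: "f * g \<in> ?J" if "f \<in> real_power I s" "g \<in> real_power I r" for f g
    proof -
      have "is_ideal {g. f * g \<in> ?J}"
        using idJ unfolding is_ideal_def by (auto simp: distrib_left mult.left_commute)
      moreover have "?S r \<subseteq> {g. f * g \<in> ?J}" using step1 that(1) by blast
      ultimately show ?thesis using gmin that(2) by blast
    qed
    show ?thesis unfolding ideal_prod_def
      by (rule ideal_gen_min[OF idJ]) (use step2 in blast)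
  qed
qed

end
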